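(* Let $l>0$, $h=ld^{-1/2}$, and let the RWM chains $(X_t,Y_t)$ targeting $\mathcal{N}_d(0,I_d)$ be coupled by the CRN, reflection or GCRN coupling. Let $W_{t/d}=\frac1d(\lVert X_t\rVert^2,\lVert Y_t\rVert^2,X_t^\top Y_t)$. For all $X,Y>0$, $$\limsup_{d\to\infty}\ \sup_{w\in\mathcal{S}(X,Y)}\ \mathbb{E}\Big\{\lVert W_{(t+1)/d}-W_{t/d}\rVert^2\ \Big|\ W_{t/d}=w\Big\}d^2<\infty.$$
   Context: RWM chains: $X_{t+1}=X_t+hZ_xB_x$, $Y_{t+1}=Y_t+hZ_yB_y$ with $B_x=\mathbb{1}\{U_x\le\exp(-hX_t^\top Z_x-h^2\lVert Z_x\rVert^2/2)\}$, analogously $B_y$; marginally $Z_x,Z_y\sim\mathcal{N}_d(0,I_d)$, $U_x,U_y\sim\mathrm{Unif}(0,1)$ independent of the respective noise. All three couplings set $U_y=U_x$. With $n_x=-X_t/\lVert X_t\rVert$, $n_y=-Y_t/\lVert Y_t\rVert$: CRN: $Z_y=Z_x$; reflection: $Z_y=Z_x-2(e^\top Z_x)e$, $e=(X_t-Y_t)/\lVert X_t-Y_t\rVert$; GCRN: $Z_x=Z-(n_x^\top Z)n_x+Z_1n_x$, $Z_y=Z-(n_y^\top Z)n_y+Z_1n_y$ with $Z\sim\mathcal{N}_d(0,I_d)$, $Z_1\sim\mathcal{N}(0,1)$ independent. $\mathcal{S}(X,Y)=\{(x,y,v):x\in[0,X],y\in[0,Y],|v|\le\sqrt{xy}\}$.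 *)

theory Defs
  imports "HOL-Probability.Probability"
begin

text \<open>Vectors of R^d are represented as functions nat => real; only indices i < d matter.\<close>

definition ipd :: "nat \<Rightarrow> (nat \<Rightarrow> real) \<Rightarrow> (nat \<Rightarrow> real) \<Rightarrow> real" where
  "ipd d x y = (\<Sum>i<d. x i * y i)"

definition sqd :: "nat \<Rightarrow> (nat \<Rightarrow> real) \<Rightarrow> real" where
  "sqd d x = ipd d x x"

text \<open>Normalisation v / norm v, with the convention 0 / 0 = 0.\<close>
definition unitd :: "nat \<Rightarrow> (nat \<Rightarrow> real) \<Rightarrow> (nat \<Rightarrow> real)" where
  "unitd d v = (\<lambda>i. v i / sqrt (sqd d v))"

datatype coupling = CRN | Reflection | GCRN

text \<open>The pair of proposal noises (Z_x, Z_y) produced by the coupling at state (x, y)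
  from the driving noise z ~ N_d(0, I_d) and z1 ~ N(0,1).\<close>
fun noises :: "coupling \<Rightarrow> nat \<Rightarrow> (nat \<Rightarrow> real) \<Rightarrow> (nat \<Rightarrow> real) \<Rightarrow> (nat \<Rightarrow> real) \<Rightarrow> real
     \<Rightarrow> (nat \<Rightarrow> real) \<times> (nat \<Rightarrow> real)" where
  "noises CRN d x y z z1 = (z, z)"
| "noises Reflection d x y z z1 =
     (let e = unitd d (\<lambda>i. x i - y i) in (z, \<lambda>i. z i - 2 * ipd d e z * e i))"
| "noises GCRN d x y z z1 =
     (let nx = unitd d (\<lambda>i. - x i); ny = unitd d (\<lambda>i. - y i) in
      (\<lambda>i. z i - ipd d nx z * nx i + z1 * nx i, \<lambda>i. z i - ipd d ny z * ny i + z1 * ny i))"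

text \<open>One RWM step targeting N_d(0, I_d) with step size h, noise z and uniform u.\<close>
definition rwm_step :: "real \<Rightarrow> nat \<Rightarrow> (nat \<Rightarrow> real) \<Rightarrow> (nat \<Rightarrow> real) \<Rightarrow> real \<Rightarrow> (nat \<Rightarrow> real)" where
  "rwm_step h d x z u =
     (if u \<le> exp (- h * ipd d x z - h\<^sup>2 * sqd d z / 2) then (\<lambda>i. x i + h * z i) else x)"

definition Wstat :: "nat \<Rightarrow> (nat \<Rightarrow> real) \<Rightarrow> (nat \<Rightarrow> real) \<Rightarrow> real \<times> real \<times> real" where
  "Wstat d x y = (sqd d x / real d, sqd d y / real d, ipd d x y / real d)"

definition sqdist3 :: "real \<times> real \<times> real \<Rightarrow> real \<times> real \<times> real \<Rightarrow> real" where
  "sqdist3 a b = (fst a - fst b)\<^sup>2 + (fst (snd a) - fst (snd b))\<^sup>2 + (snd (snd a) - snd (snd b))\<^sup>2"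

definition Sset :: "real \<Rightarrow> real \<Rightarrow> (real \<times> real \<times> real) set" where
  "Sset X Y = {(a, b, v). 0 \<le> a \<and> a \<le> X \<and> 0 \<le> b \<and> b \<le> Y \<and> \<bar>v\<bar> \<le> sqrt (a * b)}"

text \<open>Law of the driving randomness (Z, Z_1, U): Z ~ N_d(0,I_d), Z_1 ~ N(0,1), U ~ Unif(0,1),
  independent. The coupling uses U_y = U_x = U.\<close>
definition noise_measure :: "nat \<Rightarrow> ((nat \<Rightarrow> real) \<times> real \<times> real) measure" where
  "noise_measure d =
     PiM {..<d} (\<lambda>_. density lborel std_normal_density) \<Otimes>\<^sub>M
     (density lborel std_normal_density \<Otimes>\<^sub>M uniform_measure lborel {0..1})"

definition W_incr_sq :: "coupling \<Rightarrow> real \<Rightarrow> nat \<Rightarrow> (nat \<Rightarrow> real) \<Rightarrow> (nat \<Rightarrow> real)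
     \<Rightarrow> (nat \<Rightarrow> real) \<times> real \<times> real \<Rightarrow> real" where
  "W_incr_sq c h d x y \<omega> =
     (case \<omega> of (z, z1, u) \<Rightarrow>
       (let (zx, zy) = noises c d x y z z1 in
        sqdist3 (Wstat d (rwm_step h d x zx u) (rwm_step h d y zy u)) (Wstat d x y)))"

text \<open>E{ ||W_{(t+1)/d} - W_{t/d}||^2 | (X_t, Y_t) = (x, y) } with h = l d^{-1/2}.\<close>
definition cond_incr :: "coupling \<Rightarrow> real \<Rightarrow> nat \<Rightarrow> (nat \<Rightarrow> real) \<Rightarrow> (nat \<Rightarrow> real) \<Rightarrow> ennreal" where
  "cond_incr c l d x y =
     (\<integral>\<^sup>+ \<omega>. ennreal (W_incr_sq c (l / sqrt (real d)) d x y \<omega>) \<partial>noise_measure d)"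

end

theory Submission
  imports Defs
begin


abbreviation NN :: "real measure" where "NN \<equiv> density lborel std_normal_density"

definition mom :: "nat \<Rightarrow> real" where
  "mom k = integral\<^sup>L lborel (\<lambda>x. std_normal_density x * x ^ k)"

lemma prob_NN: "prob_space NN"
  by (rule prob_space_normal_density) simp

lemma NN_mom: "has_bochner_integral NN (\<lambda>x. x ^ k) (mom k)"
  unfolding mom_def
  by (rule has_bochner_integral_density) (auto simp: normal_density_nonneg
      intro!: has_bochner_integral_integrable integrable_std_normal_moment)

lemma mom_vals: "mom 0 = 1" "mom 1 = 0" "mom 2 = 1" "mom 4 = 3"
proof -
  show "mom 0 = 1" using integral_std_normal_moment_even[of 0] by (simp add: mom_def)
  show "mom 1 = 0" using integral_std_normal_moment_odd[of 0] by (simp add: mom_def)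
  show "mom 2 = 1" using integral_std_normal_moment_even[of 1] by (simp add: mom_def)
  have "fact 4 = (24::real)" by (simp add: fact_numeral)
  then show "mom 4 = 3" using integral_std_normal_moment_even[of 2] by (simp add: mom_def)
qed

abbreviation PP :: "nat \<Rightarrow> (nat \<Rightarrow> real) measure" where
  "PP d \<equiv> PiM {..<d} (\<lambda>_. NN)"

lemma prodmom:
  assumes "i < d" "j < d"
  shows "has_bochner_integral (PP d) (\<lambda>z. z i ^ p * z j ^ q)
           (if i = j then mom (p + q) else mom p * mom q)"
proof -
  interpret product_prob_space "\<lambda>_. NN" "{..<d}"
    by (auto simp: product_prob_space_def product_sigma_finite_def prob_NN
        prob_space_imp_sigma_finite product_prob_space_axioms_def)
  define f where "f k t = t ^ ((if k = i then p else 0) + (if k = j then q else 0))" for k and t :: real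
  have fi: "integrable NN (f k)" for k
    unfolding f_def using NN_mom by (rule integrable.intros)
  have pw: "t ^ (if b then n else 0) = (if b then t ^ n else 1)" for t :: real and b n by simp
  have eq: "(\<Prod>k\<in>{..<d}. f k (z k)) = z i ^ p * z j ^ q" for z
    unfolding f_def power_add pw prod.distrib using assms by (simp add: prod.delta)
  have int: "integrable (PP d) (\<lambda>z. z i ^ p * z j ^ q)"
    using product_integrable_prod[of "{..<d}" f] fi eq by simp
  have ik: "integral\<^sup>L NN (f k) = (if k = i \<and> k = j then mom (p+q) else if k = i then mom p
     else if k = j then mom q else 1)" for k
    unfolding f_def using NN_mom[of "p+q"] NN_mom[of p] NN_mom[of q] NN_mom[of 0] mom_vals(1)
    by (auto simp: has_bochner_integral_iff)
  have "integral\<^sup>L (PP d) (\<lambda>z. z i ^ p * z j ^ q) = (\<Prod>k\<in>{..<d}. integral\<^sup>L NN (f k))"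
    using product_integral_prod[of "{..<d}" f] fi eq by simp
  also have "\<dots> = (if i = j then mom (p + q) else mom p * mom q)"
  proof (cases "i = j")
    case True
    have "(\<Prod>k\<in>{..<d}. integral\<^sup>L NN (f k)) = (\<Prod>k\<in>{..<d}. if k = i then mom (p+q) else 1)"
      unfolding ik using True by (intro prod.cong) auto
    then show ?thesis using assms True by (simp add: prod.delta)
  next
    case False
    have "(\<Prod>k\<in>{..<d}. integral\<^sup>L NN (f k)) =
      (\<Prod>k\<in>{..<d}. (if k = i then mom p else 1) * (if k = j then mom q else 1))"
      unfolding ik using False by (intro prod.cong) auto
    then show ?thesis unfolding prod.distrib using assms False by (simp add: prod.delta)
  qed
  finally show ?thesis using int by (simp add: has_bochner_integral_iff)
qed

lemma sq_sum_expand: "(\<Sum>i<d. (a i::real))\<^sup>2 = (\<Sum>i<d. \<Sum>j<d. a i * a j)"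
  by (simp add: power2_eq_square sum_product)

lemma L1b: "has_bochner_integral (PP d) (\<lambda>z. (ipd d b z)\<^sup>2) (sqd d b)"
proof -
  have "has_bochner_integral (PP d) (\<lambda>z. \<Sum>i<d. \<Sum>j<d. b i * b j * (z i ^ 1 * z j ^ 1))
     (\<Sum>i<d. \<Sum>j<d. b i * b j * (if i = j then mom (1 + 1) else mom 1 * mom 1))"
    by (intro has_bochner_integral_sum has_bochner_integral_mult_right prodmom) auto
  moreover have "(\<Sum>i<d. \<Sum>j<d. b i * b j * (if i = j then mom (1 + 1) else mom 1 * mom 1))
     = (\<Sum>i<d. \<Sum>j<d. if j = i then b i * b i else 0)"
    using mom_vals by (intro sum.cong) (auto simp: numeral_2_eq_2[symmetric])
  moreover have "(\<lambda>z. \<Sum>i<d. \<Sum>j<d. b i * b j * (z i ^ 1 * z j ^ 1)) = (\<lambda>z. (ipd d b z)\<^sup>2)"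
    unfolding ipd_def sq_sum_expand by (auto simp: algebra_simps)
  ultimately show "has_bochner_integral (PP d) (\<lambda>z. (ipd d b z)\<^sup>2) (sqd d b)"
    by (simp add: sqd_def ipd_def sum.delta)
qed

lemma L1: "(\<integral>\<^sup>+ z. ennreal ((ipd d b z)\<^sup>2) \<partial>PP d) = ennreal (sqd d b)"
proof -
  note L1b[of d b]
  then show ?thesis
    by (subst nn_integral_eq_integral) (auto simp: has_bochner_integral_iff)
qed

lemma L2b: "\<exists>v. has_bochner_integral (PP d) (\<lambda>z. (sqd d z)\<^sup>2) v \<and> v \<le> 3 * (real d)\<^sup>2"
proof -
  have "has_bochner_integral (PP d) (\<lambda>z. \<Sum>i<d. \<Sum>j<d. (z i ^ 2 * z j ^ 2))
     (\<Sum>i<d. \<Sum>j<d. (if i = j then mom (2 + 2) else mom 2 * mom 2))"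
    by (intro has_bochner_integral_sum prodmom) auto
  moreover have "(\<lambda>z. \<Sum>i<d. \<Sum>j<d. (z i ^ 2 * z j ^ 2)) = (\<lambda>z. (sqd d z)\<^sup>2)"
    unfolding sqd_def ipd_def sq_sum_expand by (auto simp: power2_eq_square)
  moreover have "(\<Sum>i<d. \<Sum>j<d. (if i = j then mom (2 + 2) else mom 2 * mom 2)) \<le> (\<Sum>i<d. \<Sum>j<d. 3)"
    using mom_vals by (intro sum_mono) auto
  ultimately have "has_bochner_integral (PP d) (\<lambda>z. (sqd d z)\<^sup>2) (\<Sum>i<d. \<Sum>j<d. (if i = j then mom (2 + 2) else mom 2 * mom 2))"
     and le: "(\<Sum>i<d. \<Sum>j<d. (if i = j then mom (2 + 2) else mom 2 * mom 2)) \<le> 3 * (real d)\<^sup>2"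
    by (auto simp: power2_eq_square)
  then show ?thesis by blast
qed

lemma NN_nn: "(\<integral>\<^sup>+ t. ennreal (t ^ k) \<partial>NN) = ennreal (mom k)" if "even k"
proof -
  have "0 \<le> t ^ k" for t :: real using that by (simp add: zero_le_even_power)
  then show ?thesis using NN_mom[of k]
    by (subst nn_integral_eq_integral) (auto simp: has_bochner_integral_iff)
qed


lemma int_fst:
  fixes F :: "'a \<Rightarrow> ennreal"
  assumes "prob_space M2" and [measurable]: "F \<in> borel_measurable M1"
  shows "(\<integral>\<^sup>+ \<omega>. F (fst \<omega>) \<partial>(M1 \<Otimes>\<^sub>M M2)) = integral\<^sup>N M1 F"
proof -
  interpret M2: prob_space M2 by fact
  have "(\<integral>\<^sup>+ \<omega>. F (fst \<omega>) \<partial>(M1 \<Otimes>\<^sub>M M2)) = (\<integral>\<^sup>+ x. \<integral>\<^sup>+ y. F (fst (x, y)) \<partial>M2 \<partial>M1)"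
    by (rule M2.nn_integral_fst[symmetric]) measurable
  also have "\<dots> = integral\<^sup>N M1 F"
    by (simp add: M2.emeasure_space_1)
  finally show ?thesis .
qed

lemma int_snd:
  fixes G :: "'b \<Rightarrow> ennreal"
  assumes "prob_space M1" "sigma_finite_measure M2" and [measurable]: "G \<in> borel_measurable M2"
  shows "(\<integral>\<^sup>+ \<omega>. G (snd \<omega>) \<partial>(M1 \<Otimes>\<^sub>M M2)) = integral\<^sup>N M2 G"
proof -
  interpret M1: prob_space M1 by fact
  interpret pair_sigma_finite M1 M2
    by (simp add: assms(2) pair_sigma_finite_def prob_space_imp_sigma_finite M1.prob_space_axioms)
  have "(\<integral>\<^sup>+ \<omega>. G (snd \<omega>) \<partial>(M1 \<Otimes>\<^sub>M M2)) = (\<integral>\<^sup>+ y. \<integral>\<^sup>+ x. G (snd (x, y)) \<partial>M1 \<partial>M2)"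
    by (rule nn_integral_snd[symmetric]) measurable
  also have "\<dots> = integral\<^sup>N M2 G"
    by (simp add: M1.emeasure_space_1)
  finally show ?thesis .
qed

lemma prob_U: "prob_space (uniform_measure lborel {0..1::real})"
  by (rule prob_space_uniform_measure) auto

lemma prob_PP: "prob_space (PP d)"
  by (rule prob_space_PiM) (rule prob_NN)

lemma noise_split:
  fixes F :: "(nat \<Rightarrow> real) \<Rightarrow> ennreal" and G :: "real \<Rightarrow> ennreal"
  assumes [measurable]: "F \<in> borel_measurable (PP d)" "G \<in> borel_measurable borel"
  shows "(\<integral>\<^sup>+ \<omega>. F (fst \<omega>) + G (fst (snd \<omega>)) \<partial>noise_measure d) = integral\<^sup>N (PP d) F + integral\<^sup>N NN G"
proof -
  have pQ: "prob_space (NN \<Otimes>\<^sub>M uniform_measure lborel {0..1::real})"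
    by (rule prob_space_pair[OF prob_NN prob_U])
  have Gm: "(\<lambda>y. G (fst y)) \<in> borel_measurable (NN \<Otimes>\<^sub>M uniform_measure lborel {0..1::real})"
    by measurable
  show ?thesis
    unfolding noise_measure_def
    apply (subst nn_integral_add)
      apply measurable
    apply (subst int_fst[OF pQ], measurable)
    apply (subst int_snd[OF prob_PP prob_space_imp_sigma_finite[OF pQ] Gm])
    apply (subst int_fst[OF prob_U], measurable)
    done
qed



lemma ipd_add_left: "ipd d (\<lambda>i. f i + g i) c = ipd d f c + ipd d g c"
  by (simp add: ipd_def algebra_simps sum.distrib)
lemma ipd_diff_left: "ipd d (\<lambda>i. f i - g i) c = ipd d f c - ipd d g c"
  by (simp add: ipd_def algebra_simps sum_subtractf)
lemma ipd_scale_left: "ipd d (\<lambda>i. s * f i) c = s * ipd d f c"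
  by (simp add: ipd_def algebra_simps sum_distrib_left)
lemma ipd_comm: "ipd d a b = ipd d b a"
  by (simp add: ipd_def mult.commute)
lemma ipd_add_right: "ipd d c (\<lambda>i. f i + g i) = ipd d c f + ipd d c g"
  by (simp add: ipd_def algebra_simps sum.distrib)
lemma ipd_diff_right: "ipd d c (\<lambda>i. f i - g i) = ipd d c f - ipd d c g"
  by (simp add: ipd_def algebra_simps sum_subtractf)
lemma ipd_scale_right: "ipd d c (\<lambda>i. s * f i) = s * ipd d c f"
  by (simp add: ipd_def algebra_simps sum_distrib_left)
lemmas ipd_lin = ipd_add_left ipd_diff_left ipd_scale_left ipd_add_right ipd_diff_right ipd_scale_right

lemma sq_add_le: "((u::real) + v)\<^sup>2 \<le> 2 * u\<^sup>2 + 2 * v\<^sup>2"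
proof -
  have "0 \<le> (u - v)\<^sup>2" by simp
  then show ?thesis by (simp add: power2_eq_square algebra_simps)
qed

lemma sqd_add_le: "sqd d (\<lambda>i. u i + v i) \<le> 2 * sqd d u + 2 * sqd d v"
proof -
  have "sqd d (\<lambda>i. u i + v i) = (\<Sum>i<d. (u i + v i)\<^sup>2)" by (simp add: sqd_def ipd_def power2_eq_square)
  also have "\<dots> \<le> (\<Sum>i<d. 2 * (u i)\<^sup>2 + 2 * (v i)\<^sup>2)" by (intro sum_mono sq_add_le)
  also have "\<dots> = 2 * sqd d u + 2 * sqd d v"
    by (simp add: sqd_def ipd_def power2_eq_square sum.distrib sum_distrib_left)
  finally show ?thesis .
qed

lemma sqd_nonneg: "0 \<le> sqd d a"
  by (simp add: sqd_def ipd_def sum_nonneg)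

lemma CS: "(ipd d a b)\<^sup>2 \<le> sqd d a * sqd d b"
  unfolding sqd_def ipd_def using Cauchy_Schwarz_ineq_sum[of a b "{..<d}"]
  by (simp add: power2_eq_square)

lemma sqd_unitd: "sqd d (unitd d v) \<le> 1"
proof -
  have "sqd d (unitd d v) = sqd d v / (sqrt (sqd d v))\<^sup>2"
    by (simp add: sqd_def ipd_def unitd_def sum_divide_distrib power2_eq_square)
  also have "\<dots> = sqd d v / sqd d v" using sqd_nonneg[of d v] by simp
  also have "\<dots> \<le> 1" by (cases "sqd d v = 0") auto
  finally show ?thesis .
qed

lemma refl_lin:
  assumes "sqd d e \<le> 1"
  shows "ipd d a (\<lambda>i. z i - 2 * ipd d e z * e i) = ipd d (\<lambda>i. a i - 2 * ipd d a e * e i) z"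
    and "sqd d (\<lambda>i. a i - 2 * ipd d a e * e i) \<le> sqd d a"
proof -
  show "ipd d a (\<lambda>i. z i - 2 * ipd d e z * e i) = ipd d (\<lambda>i. a i - 2 * ipd d a e * e i) z"
    by (simp add: ipd_lin ipd_comm[of d e z] ipd_comm[of d a e] ipd_comm[of d a z])
  have "sqd d (\<lambda>i. a i - 2 * ipd d a e * e i) = sqd d a - 4 * (ipd d a e)\<^sup>2 + 4 * (ipd d a e)\<^sup>2 * sqd d e"
    unfolding sqd_def by (simp only: ipd_lin) (simp add: ipd_comm[of d e a] power2_eq_square algebra_simps)
  also have "\<dots> \<le> sqd d a" using assms
    by (simp add: mult_left_le)
  finally show "sqd d (\<lambda>i. a i - 2 * ipd d a e * e i) \<le> sqd d a" .
qed

lemma proj_lin: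
  assumes "sqd d n \<le> 1"
  shows "(ipd d a (\<lambda>i. z i - ipd d n z * n i + z1 * n i))\<^sup>2 \<le>
           2 * (ipd d (\<lambda>i. a i - ipd d a n * n i) z)\<^sup>2 + 2 * sqd d a * z1\<^sup>2"
    and "sqd d (\<lambda>i. a i - ipd d a n * n i) \<le> sqd d a"
    and "sqd d (\<lambda>i. z i - ipd d n z * n i + z1 * n i) \<le> 2 * sqd d z + 2 * z1\<^sup>2"
proof -
  have e1: "ipd d a (\<lambda>i. z i - ipd d n z * n i + z1 * n i) = ipd d (\<lambda>i. a i - ipd d a n * n i) z + z1 * ipd d a n"
    by (simp add: ipd_lin ipd_comm[of d n z] ipd_comm[of d a n] ipd_comm[of d a z])
  have an: "(ipd d a n)\<^sup>2 \<le> sqd d a"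
    using CS[of d a n] assms sqd_nonneg[of d a] by (meson mult_left_le order_trans)
  have "(ipd d (\<lambda>i. a i - ipd d a n * n i) z + z1 * ipd d a n)\<^sup>2 \<le>
     2 * (ipd d (\<lambda>i. a i - ipd d a n * n i) z)\<^sup>2 + 2 * (z1 * ipd d a n)\<^sup>2"
    by (rule sq_add_le)
  also have "(z1 * ipd d a n)\<^sup>2 \<le> sqd d a * z1\<^sup>2"
    using mult_left_mono[OF an, of "z1\<^sup>2"] by (simp add: power_mult_distrib mult.commute)
  finally show "(ipd d a (\<lambda>i. z i - ipd d n z * n i + z1 * n i))\<^sup>2 \<le>
           2 * (ipd d (\<lambda>i. a i - ipd d a n * n i) z)\<^sup>2 + 2 * sqd d a * z1\<^sup>2"
    unfolding e1 by simp
  have "sqd d (\<lambda>i. a i - ipd d a n * n i) = sqd d a - 2 * (ipd d a n)\<^sup>2 + (ipd d a n)\<^sup>2 * sqd d n"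
    unfolding sqd_def by (simp only: ipd_lin) (simp add: ipd_comm[of d n a] power2_eq_square algebra_simps)
  also have "\<dots> \<le> sqd d a"
    using mult_left_le[OF assms, of "(ipd d a n)\<^sup>2"] zero_le_power2[of "ipd d a n"] by linarith
  finally show "sqd d (\<lambda>i. a i - ipd d a n * n i) \<le> sqd d a" .
  define p where "p = (\<lambda>i. z i - ipd d n z * n i)"
  have sp: "sqd d p = sqd d z - 2 * (ipd d n z)\<^sup>2 + (ipd d n z)\<^sup>2 * sqd d n"
    unfolding sqd_def p_def by (simp only: ipd_lin) (simp add: ipd_comm[of d n z] power2_eq_square algebra_simps)
  have sp2: "sqd d p \<le> sqd d z" unfolding sp
    using mult_left_le[OF assms, of "(ipd d n z)\<^sup>2"] zero_le_power2[of "ipd d n z"] by linarith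
  have "sqd d (\<lambda>i. p i + z1 * n i) \<le> 2 * sqd d p + 2 * sqd d (\<lambda>i. z1 * n i)"
    by (rule sqd_add_le)
  also have "sqd d (\<lambda>i. z1 * n i) = z1\<^sup>2 * sqd d n"
    unfolding sqd_def by (simp only: ipd_lin) (simp add: power2_eq_square)
  also have "2 * sqd d p + 2 * (z1\<^sup>2 * sqd d n) \<le> 2 * sqd d z + 2 * z1\<^sup>2"
    using sp2 mult_left_le[OF assms, of "z1\<^sup>2"] by (simp add: mult.commute[of "z1\<^sup>2"])
  finally show "sqd d (\<lambda>i. z i - ipd d n z * n i + z1 * n i) \<le> 2 * sqd d z + 2 * z1\<^sup>2"
    unfolding p_def by simp
qed



lemma noise_lin:
  "\<exists>b. sqd d b \<le> sqd d a \<and> (\<forall>z z1. (ipd d a (fst (noises c d x y z z1)))\<^sup>2 \<le> 2 * (ipd d b z)\<^sup>2 + 2 * sqd d a * z1\<^sup>2)"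
  "\<exists>b. sqd d b \<le> sqd d a \<and> (\<forall>z z1. (ipd d a (snd (noises c d x y z z1)))\<^sup>2 \<le> 2 * (ipd d b z)\<^sup>2 + 2 * sqd d a * z1\<^sup>2)"
proof -
  have triv: "(ipd d b z)\<^sup>2 \<le> 2 * (ipd d b z)\<^sup>2 + 2 * sqd d a * z1\<^sup>2" for b z z1
    using sqd_nonneg[of d a] zero_le_power2[of "ipd d b z"] zero_le_power2[of z1]
    by (simp add: mult_nonneg_nonneg add_increasing2)
  show "\<exists>b. sqd d b \<le> sqd d a \<and> (\<forall>z z1. (ipd d a (fst (noises c d x y z z1)))\<^sup>2 \<le> 2 * (ipd d b z)\<^sup>2 + 2 * sqd d a * z1\<^sup>2)"
  proof (cases c)
    case GCRN
    let ?n = "unitd d (\<lambda>i. - x i)"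
    show ?thesis using GCRN proj_lin(1,2)[where n="unitd d (\<lambda>i. - x i)" and a=a, OF sqd_unitd]
      by (intro exI[of _ "\<lambda>i. a i - ipd d a ?n * ?n i"]) (auto simp: Let_def)
  qed (auto intro!: exI[of _ a] simp: triv Let_def)
  show "\<exists>b. sqd d b \<le> sqd d a \<and> (\<forall>z z1. (ipd d a (snd (noises c d x y z z1)))\<^sup>2 \<le> 2 * (ipd d b z)\<^sup>2 + 2 * sqd d a * z1\<^sup>2)"
  proof (cases c)
    case GCRN
    let ?n = "unitd d (\<lambda>i. - y i)"
    show ?thesis using GCRN proj_lin(1,2)[where n="unitd d (\<lambda>i. - y i)" and a=a, OF sqd_unitd]
      by (intro exI[of _ "\<lambda>i. a i - ipd d a ?n * ?n i"]) (auto simp: Let_def)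
  next
    case Reflection
    let ?e = "unitd d (\<lambda>i. x i - y i)"
    show ?thesis using Reflection refl_lin[where e="unitd d (\<lambda>i. x i - y i)" and a=a, OF sqd_unitd] triv
      by (intro exI[of _ "\<lambda>i. a i - 2 * ipd d a ?e * ?e i"]) (auto simp: Let_def)
  qed (auto intro!: exI[of _ a] simp: triv Let_def)
qed

lemma noise_norm:
  "sqd d (fst (noises c d x y z z1)) \<le> 2 * sqd d z + 2 * z1\<^sup>2"
  "sqd d (snd (noises c d x y z z1)) \<le> 2 * sqd d z + 2 * z1\<^sup>2"
proof -
  have triv: "sqd d z \<le> 2 * sqd d z + 2 * z1\<^sup>2"
    using sqd_nonneg[of d z] zero_le_power2[of z1] by linarith
  show "sqd d (fst (noises c d x y z z1)) \<le> 2 * sqd d z + 2 * z1\<^sup>2"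
    using proj_lin(3)[where n="unitd d (\<lambda>i. - x i)", OF sqd_unitd] triv
    by (cases c) (auto simp: Let_def)
  have r: "sqd d (\<lambda>i. z i - 2 * ipd d (unitd d (\<lambda>i. x i - y i)) z * unitd d (\<lambda>i. x i - y i) i) \<le> sqd d z"
    using refl_lin(2)[where e="unitd d (\<lambda>i. x i - y i)" and a=z, OF sqd_unitd] by (simp add: ipd_comm)
  show "sqd d (snd (noises c d x y z z1)) \<le> 2 * sqd d z + 2 * z1\<^sup>2"
    using proj_lin(3)[where n="unitd d (\<lambda>i. - y i)", OF sqd_unitd] triv r
    by (cases c) (auto simp: Let_def)
qed

lemma step_form: "\<exists>t. (t = 0 \<or> t = h) \<and> rwm_step h d x z u = (\<lambda>i. x i + t * z i)"
  unfolding rwm_step_def by (cases "u \<le> exp (- h * ipd d x z - h\<^sup>2 * sqd d z / 2)") (auto intro: exI[of _ 0])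

lemma sqd_step: "sqd d (\<lambda>i. x i + t * z i) = sqd d x + 2 * t * ipd d x z + t\<^sup>2 * sqd d z"
  unfolding sqd_def by (simp only: ipd_lin) (simp add: ipd_comm[of d z x] power2_eq_square algebra_simps)

lemma ipd_step: "ipd d (\<lambda>i. x i + s * zx i) (\<lambda>i. y i + t * zy i) =
   ipd d x y + t * ipd d x zy + s * ipd d zx y + s * t * ipd d zx zy"
  by (simp only: ipd_lin) (simp add: algebra_simps)

lemma sq3_le: "((a::real) + b + c)\<^sup>2 \<le> 3 * a\<^sup>2 + 3 * b\<^sup>2 + 3 * c\<^sup>2"
proof -
  have "0 \<le> (a - b)\<^sup>2 + (b - c)\<^sup>2 + (a - c)\<^sup>2" by simp
  then show ?thesis by (simp add: power2_eq_square algebra_simps)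
qed

lemma incr_bound:
  assumes d: "d > 0" and h: "h \<ge> 0" and tx: "tx = 0 \<or> tx = h" and ty: "ty = 0 \<or> ty = h"
  shows "(real d)\<^sup>2 * sqdist3 (Wstat d (\<lambda>i. x i + tx * zx i) (\<lambda>i. y i + ty * zy i)) (Wstat d x y)
     \<le> 8 * h\<^sup>2 * ((ipd d x zx)\<^sup>2 + (ipd d y zy)\<^sup>2 + (ipd d x zy)\<^sup>2 + (ipd d y zx)\<^sup>2)
       + 4 * h ^ 4 * ((sqd d zx)\<^sup>2 + (sqd d zy)\<^sup>2)"
proof -
  have tx2: "tx\<^sup>2 \<le> h\<^sup>2" and ty2: "ty\<^sup>2 \<le> h\<^sup>2" using tx ty by auto
  have tx4: "tx ^ 4 \<le> h ^ 4" and ty4: "ty ^ 4 \<le> h ^ 4" using tx ty h by auto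
  have dd: "(real d)\<^sup>2 * (A / real d - B / real d)\<^sup>2 = (A - B)\<^sup>2" for A B
    using d by (simp add: power2_eq_square field_simps)
  have T1: "(2 * t * p + t\<^sup>2 * q)\<^sup>2 \<le> 8 * h\<^sup>2 * p\<^sup>2 + 2 * h ^ 4 * q\<^sup>2"
    if "t\<^sup>2 \<le> h\<^sup>2" "t ^ 4 \<le> h ^ 4" for t p q :: real
  proof -
    have "(2 * t * p + t\<^sup>2 * q)\<^sup>2 \<le> 2 * (2 * t * p)\<^sup>2 + 2 * (t\<^sup>2 * q)\<^sup>2" by (rule sq_add_le)
    also have "\<dots> = 8 * t\<^sup>2 * p\<^sup>2 + 2 * t ^ 4 * q\<^sup>2" by (simp add: power_mult_distrib power2_eq_square power4_eq_xxxx)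
    also have "\<dots> \<le> 8 * h\<^sup>2 * p\<^sup>2 + 2 * h ^ 4 * q\<^sup>2"
      using mult_right_mono[OF that(1), of "p\<^sup>2"] mult_right_mono[OF that(2), of "q\<^sup>2"] by simp
    finally show ?thesis .
  qed
  have C: "(ipd d zx zy)\<^sup>2 \<le> ((sqd d zx)\<^sup>2 + (sqd d zy)\<^sup>2) / 2"
  proof -
    have "0 \<le> (sqd d zx - sqd d zy)\<^sup>2" by simp
    then have "sqd d zx * sqd d zy \<le> ((sqd d zx)\<^sup>2 + (sqd d zy)\<^sup>2) / 2"
      by (simp add: power2_eq_square algebra_simps)
    then show ?thesis using CS[of d zx zy] by linarith
  qed
  have T3: "(ty * ipd d x zy + tx * ipd d zx y + tx * ty * ipd d zx zy)\<^sup>2 \<le>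
     3 * h\<^sup>2 * (ipd d x zy)\<^sup>2 + 3 * h\<^sup>2 * (ipd d y zx)\<^sup>2 + 3 * h ^ 4 * ((sqd d zx)\<^sup>2 + (sqd d zy)\<^sup>2) / 2"
  proof -
    have "(ty * ipd d x zy + tx * ipd d zx y + tx * ty * ipd d zx zy)\<^sup>2 \<le>
       3 * (ty * ipd d x zy)\<^sup>2 + 3 * (tx * ipd d zx y)\<^sup>2 + 3 * (tx * ty * ipd d zx zy)\<^sup>2" by (rule sq3_le)
    also have "\<dots> = 3 * ty\<^sup>2 * (ipd d x zy)\<^sup>2 + 3 * tx\<^sup>2 * (ipd d y zx)\<^sup>2 + 3 * (tx\<^sup>2 * ty\<^sup>2) * (ipd d zx zy)\<^sup>2"
      by (simp add: power_mult_distrib ipd_comm[of d zx y])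
    also have "\<dots> \<le> 3 * h\<^sup>2 * (ipd d x zy)\<^sup>2 + 3 * h\<^sup>2 * (ipd d y zx)\<^sup>2 + 3 * h ^ 4 * (((sqd d zx)\<^sup>2 + (sqd d zy)\<^sup>2) / 2)"
    proof -
      have "tx\<^sup>2 * ty\<^sup>2 \<le> h ^ 4" using tx ty h by auto
      moreover have "0 \<le> tx\<^sup>2 * ty\<^sup>2" by simp
      ultimately have "(tx\<^sup>2 * ty\<^sup>2) * (ipd d zx zy)\<^sup>2 \<le> h ^ 4 * (((sqd d zx)\<^sup>2 + (sqd d zy)\<^sup>2) / 2)"
        using C by (intro mult_mono) auto
      then show ?thesis
        using mult_right_mono[OF ty2, of "(ipd d x zy)\<^sup>2"] mult_right_mono[OF tx2, of "(ipd d y zx)\<^sup>2"] by simp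
    qed
    finally show ?thesis by simp
  qed
  have "(real d)\<^sup>2 * sqdist3 (Wstat d (\<lambda>i. x i + tx * zx i) (\<lambda>i. y i + ty * zy i)) (Wstat d x y)
      = (2 * tx * ipd d x zx + tx\<^sup>2 * sqd d zx)\<^sup>2 + (2 * ty * ipd d y zy + ty\<^sup>2 * sqd d zy)\<^sup>2
        + (ty * ipd d x zy + tx * ipd d zx y + tx * ty * ipd d zx zy)\<^sup>2"
    unfolding sqdist3_def Wstat_def by (simp add: distrib_left dd sqd_step ipd_step add.assoc)
  also have "\<dots> \<le> (8 * h\<^sup>2 * (ipd d x zx)\<^sup>2 + 2 * h ^ 4 * (sqd d zx)\<^sup>2) + (8 * h\<^sup>2 * (ipd d y zy)\<^sup>2 + 2 * h ^ 4 * (sqd d zy)\<^sup>2)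
      + (3 * h\<^sup>2 * (ipd d x zy)\<^sup>2 + 3 * h\<^sup>2 * (ipd d y zx)\<^sup>2 + 3 * h ^ 4 * ((sqd d zx)\<^sup>2 + (sqd d zy)\<^sup>2) / 2)"
    using T1[OF tx2 tx4] T1[OF ty2 ty4] T3 by (intro add_mono) auto
  also have "\<dots> \<le> 8 * h\<^sup>2 * ((ipd d x zx)\<^sup>2 + (ipd d y zy)\<^sup>2 + (ipd d x zy)\<^sup>2 + (ipd d y zx)\<^sup>2)
       + 4 * h ^ 4 * ((sqd d zx)\<^sup>2 + (sqd d zy)\<^sup>2)"
    using zero_le_power2[of h] zero_le_power2[of "ipd d x zy"] zero_le_power2[of "ipd d y zx"]
      zero_le_power2[of "sqd d zx"] zero_le_power2[of "sqd d zy"] zero_le_power[of h 4]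
      mult_nonneg_nonneg[of "h^2" "(ipd d x zy)\<^sup>2"] mult_nonneg_nonneg[of "h^2" "(ipd d y zx)\<^sup>2"]
      mult_nonneg_nonneg[of "h^4" "(sqd d zx)\<^sup>2"] mult_nonneg_nonneg[of "h^4" "(sqd d zy)\<^sup>2"] h
    by (simp add: algebra_simps)
  finally show ?thesis .
qed



lemma cond_bound:
  assumes d: "d > 0" and l: "l > 0" and X: "X \<ge> 0" and Y: "Y \<ge> 0"
    and sx: "sqd d x \<le> X * real d" and sy: "sqd d y \<le> Y * real d"
  shows "cond_incr c l d x y \<le> ennreal ((64 * l\<^sup>2 * (X + Y) + 384 * l ^ 4) / (real d)\<^sup>2)"
proof -
  define D where "D = real d"
  have D1: "D \<ge> 1" using d by (simp add: D_def)
  define h where "h = l / sqrt (real d)"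
  have h0: "h \<ge> 0" using l by (simp add: h_def)
  have h2: "h\<^sup>2 = l\<^sup>2 / D" using d by (simp add: h_def D_def power_divide)
  have h4: "h ^ 4 = l ^ 4 / D\<^sup>2"
  proof -
    have "h ^ 4 = (h\<^sup>2)\<^sup>2" by simp
    then show ?thesis unfolding h2 by (simp add: power_divide)
  qed
  obtain b1 where b1: "sqd d b1 \<le> sqd d x" "\<And>z z1. (ipd d x (fst (noises c d x y z z1)))\<^sup>2 \<le> 2 * (ipd d b1 z)\<^sup>2 + 2 * sqd d x * z1\<^sup>2"
    using noise_lin(1)[of d x c x y] by blast
  obtain b4 where b4: "sqd d b4 \<le> sqd d y" "\<And>z z1. (ipd d y (fst (noises c d x y z z1)))\<^sup>2 \<le> 2 * (ipd d b4 z)\<^sup>2 + 2 * sqd d y * z1\<^sup>2"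
    using noise_lin(1)[of d y c x y] by blast
  obtain b3 where b3: "sqd d b3 \<le> sqd d x" "\<And>z z1. (ipd d x (snd (noises c d x y z z1)))\<^sup>2 \<le> 2 * (ipd d b3 z)\<^sup>2 + 2 * sqd d x * z1\<^sup>2"
    using noise_lin(2)[of d x c x y] by blast
  obtain b2 where b2: "sqd d b2 \<le> sqd d y" "\<And>z z1. (ipd d y (snd (noises c d x y z z1)))\<^sup>2 \<le> 2 * (ipd d b2 z)\<^sup>2 + 2 * sqd d y * z1\<^sup>2"
    using noise_lin(2)[of d y c x y] by blast
  obtain v where v: "has_bochner_integral (PP d) (\<lambda>z. (sqd d z)\<^sup>2) v" "v \<le> 3 * D\<^sup>2"
    using L2b[of d] unfolding D_def by blast
  define F where "F z = (16 * h\<^sup>2 * ((ipd d b1 z)\<^sup>2 + (ipd d b2 z)\<^sup>2 + (ipd d b3 z)\<^sup>2 + (ipd d b4 z)\<^sup>2)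
      + 64 * h ^ 4 * (sqd d z)\<^sup>2) / D\<^sup>2" for z
  define G where "G t = (32 * h\<^sup>2 * (sqd d x + sqd d y) * t\<^sup>2 + 64 * h ^ 4 * t ^ 4) / D\<^sup>2" for t :: real
  define IF where "IF = (16 * h\<^sup>2 * (sqd d b1 + sqd d b2 + sqd d b3 + sqd d b4) + 64 * h ^ 4 * v) / D\<^sup>2"
  define IG where "IG = (32 * h\<^sup>2 * (sqd d x + sqd d y) * mom 2 + 64 * h ^ 4 * mom 4) / D\<^sup>2"
  have hF: "has_bochner_integral (PP d) F IF"
    unfolding F_def IF_def
    by (intro has_bochner_integral_divide_zero has_bochner_integral_add has_bochner_integral_mult_right
        L1b v(1))
  have hG: "has_bochner_integral NN G IG"
    unfolding G_def IG_def
    by (intro has_bochner_integral_divide_zero has_bochner_integral_add has_bochner_integral_mult_right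
        NN_mom)
  have xy0: "0 \<le> sqd d x + sqd d y" using sqd_nonneg[of d x] sqd_nonneg[of d y] by simp
  have F0: "0 \<le> F z" for z
    unfolding F_def using h0 by (intro divide_nonneg_nonneg add_nonneg_nonneg mult_nonneg_nonneg) auto
  have G0: "0 \<le> G t" for t
    unfolding G_def using h0 xy0 by (intro divide_nonneg_nonneg add_nonneg_nonneg mult_nonneg_nonneg) (auto simp: sqd_nonneg)
  have pw: "W_incr_sq c h d x y \<omega> \<le> F (fst \<omega>) + G (fst (snd \<omega>))" for \<omega>
  proof -
    obtain z z1 u where om: "\<omega> = (z, z1, u)" by (cases \<omega>) auto
    define zx where "zx = fst (noises c d x y z z1)"
    define zy where "zy = snd (noises c d x y z z1)"
    obtain tx where tx: "tx = 0 \<or> tx = h" "rwm_step h d x zx u = (\<lambda>i. x i + tx * zx i)"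
      using step_form by blast
    obtain ty where ty: "ty = 0 \<or> ty = h" "rwm_step h d y zy u = (\<lambda>i. y i + ty * zy i)"
      using step_form by blast
    have W: "W_incr_sq c h d x y \<omega> = sqdist3 (Wstat d (\<lambda>i. x i + tx * zx i) (\<lambda>i. y i + ty * zy i)) (Wstat d x y)"
      unfolding W_incr_sq_def om using tx(2) ty(2)
      by (simp add: zx_def zy_def Let_def case_prod_beta)
    define S where "S = sqd d z"
    have S0: "0 \<le> S" unfolding S_def by (rule sqd_nonneg)
    have Sq: "(sqd d w)\<^sup>2 \<le> 8 * S\<^sup>2 + 8 * z1 ^ 4" if "sqd d w \<le> 2 * S + 2 * z1\<^sup>2" for w
    proof -
      have "(sqd d w)\<^sup>2 \<le> (2 * S + 2 * z1\<^sup>2)\<^sup>2"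
        using that sqd_nonneg[of d w] by (intro power_mono) auto
      also have "\<dots> \<le> 2 * (2 * S)\<^sup>2 + 2 * (2 * z1\<^sup>2)\<^sup>2" by (rule sq_add_le)
      also have "\<dots> = 8 * S\<^sup>2 + 8 * z1 ^ 4" by (simp add: power_mult_distrib power2_eq_square power4_eq_xxxx)
      finally show ?thesis .
    qed
    have Sx: "(sqd d zx)\<^sup>2 \<le> 8 * S\<^sup>2 + 8 * z1 ^ 4"
      using Sq noise_norm(1)[of d c x y z z1] unfolding zx_def S_def by blast
    have Sy: "(sqd d zy)\<^sup>2 \<le> 8 * S\<^sup>2 + 8 * z1 ^ 4"
      using Sq noise_norm(2)[of d c x y z z1] unfolding zy_def S_def by blast
    have "D\<^sup>2 * W_incr_sq c h d x y \<omega> \<le> 8 * h\<^sup>2 * ((ipd d x zx)\<^sup>2 + (ipd d y zy)\<^sup>2 + (ipd d x zy)\<^sup>2 + (ipd d y zx)\<^sup>2)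
       + 4 * h ^ 4 * ((sqd d zx)\<^sup>2 + (sqd d zy)\<^sup>2)"
      unfolding W D_def by (rule incr_bound[OF d h0 tx(1) ty(1)])
    also have "\<dots> \<le> 8 * h\<^sup>2 * ((2 * (ipd d b1 z)\<^sup>2 + 2 * sqd d x * z1\<^sup>2) + (2 * (ipd d b2 z)\<^sup>2 + 2 * sqd d y * z1\<^sup>2)
         + (2 * (ipd d b3 z)\<^sup>2 + 2 * sqd d x * z1\<^sup>2) + (2 * (ipd d b4 z)\<^sup>2 + 2 * sqd d y * z1\<^sup>2))
       + 4 * h ^ 4 * ((8 * S\<^sup>2 + 8 * z1 ^ 4) + (8 * S\<^sup>2 + 8 * z1 ^ 4))"
    proof (rule add_mono)
      have "(ipd d x zx)\<^sup>2 + (ipd d y zy)\<^sup>2 + (ipd d x zy)\<^sup>2 + (ipd d y zx)\<^sup>2 \<le>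
         (2 * (ipd d b1 z)\<^sup>2 + 2 * sqd d x * z1\<^sup>2) + (2 * (ipd d b2 z)\<^sup>2 + 2 * sqd d y * z1\<^sup>2)
         + (2 * (ipd d b3 z)\<^sup>2 + 2 * sqd d x * z1\<^sup>2) + (2 * (ipd d b4 z)\<^sup>2 + 2 * sqd d y * z1\<^sup>2)"
        using b1(2)[of z z1] b2(2)[of z z1] b3(2)[of z z1] b4(2)[of z z1]
        unfolding zx_def zy_def by (intro add_mono)
      then show "8 * h\<^sup>2 * ((ipd d x zx)\<^sup>2 + (ipd d y zy)\<^sup>2 + (ipd d x zy)\<^sup>2 + (ipd d y zx)\<^sup>2) \<le>
         8 * h\<^sup>2 * ((2 * (ipd d b1 z)\<^sup>2 + 2 * sqd d x * z1\<^sup>2) + (2 * (ipd d b2 z)\<^sup>2 + 2 * sqd d y * z1\<^sup>2)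
         + (2 * (ipd d b3 z)\<^sup>2 + 2 * sqd d x * z1\<^sup>2) + (2 * (ipd d b4 z)\<^sup>2 + 2 * sqd d y * z1\<^sup>2))"
        by (rule mult_left_mono) simp
      have "(sqd d zx)\<^sup>2 + (sqd d zy)\<^sup>2 \<le> (8 * S\<^sup>2 + 8 * z1 ^ 4) + (8 * S\<^sup>2 + 8 * z1 ^ 4)"
        using Sx Sy by (rule add_mono)
      then show "4 * h ^ 4 * ((sqd d zx)\<^sup>2 + (sqd d zy)\<^sup>2) \<le> 4 * h ^ 4 * ((8 * S\<^sup>2 + 8 * z1 ^ 4) + (8 * S\<^sup>2 + 8 * z1 ^ 4))"
        by (rule mult_left_mono) (simp add: h0)
    qed
    also have "\<dots> = D\<^sup>2 * (F z + G z1)"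
    proof -
      have "D\<^sup>2 * (F z + G z1) = (16 * h\<^sup>2 * ((ipd d b1 z)\<^sup>2 + (ipd d b2 z)\<^sup>2 + (ipd d b3 z)\<^sup>2 + (ipd d b4 z)\<^sup>2)
      + 64 * h ^ 4 * S\<^sup>2) + (32 * h\<^sup>2 * (sqd d x + sqd d y) * z1\<^sup>2 + 64 * h ^ 4 * z1 ^ 4)"
      proof -
        have gen: "D\<^sup>2 * (A / D\<^sup>2 + B / D\<^sup>2) = A + B" for A B using D1 by (simp add: field_simps)
        show ?thesis unfolding F_def G_def S_def gen ..
      qed
      then show ?thesis by (simp add: algebra_simps)
    qed
    finally have "D\<^sup>2 * W_incr_sq c h d x y \<omega> \<le> D\<^sup>2 * (F z + G z1)" .
    then show ?thesis using D1 om by (simp add: mult_le_cancel_left)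
  qed
  have Fm[measurable]: "F \<in> borel_measurable (PP d)" using hF by (rule borel_measurable_has_bochner_integral)
  have Gm[measurable]: "G \<in> borel_measurable borel"
    unfolding G_def by measurable
  have "cond_incr c l d x y \<le> (\<integral>\<^sup>+ \<omega>. ennreal (F (fst \<omega>)) + ennreal (G (fst (snd \<omega>))) \<partial>noise_measure d)"
    unfolding cond_incr_def h_def[symmetric]
    by (intro nn_integral_mono) (simp add: pw F0 G0 ennreal_plus[symmetric] ennreal_leI del: ennreal_plus)
  also have "\<dots> = (\<integral>\<^sup>+ z. ennreal (F z) \<partial>PP d) + (\<integral>\<^sup>+ t. ennreal (G t) \<partial>NN)"
    by (rule noise_split) measurable
  also have "\<dots> = ennreal IF + ennreal IG"
    using hF hG F0 G0 by (simp add: nn_integral_eq_integral has_bochner_integral_iff)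
  also have "\<dots> = ennreal (IF + IG)"
  proof -
    have "0 \<le> IF" unfolding has_bochner_integral_integral_eq[OF hF, symmetric] by (rule integral_nonneg_AE) (simp add: F0)
    moreover have "0 \<le> IG" unfolding has_bochner_integral_integral_eq[OF hG, symmetric] by (rule integral_nonneg_AE) (simp add: G0)
    ultimately show ?thesis by (simp add: ennreal_plus)
  qed
  also have "\<dots> \<le> ennreal ((64 * l\<^sup>2 * (X + Y) + 384 * l ^ 4) / (real d)\<^sup>2)"
  proof (intro ennreal_leI)
    have Sb: "sqd d b1 + sqd d b2 + sqd d b3 + sqd d b4 \<le> 2 * (X + Y) * D"
      using b1(1) b2(1) b3(1) b4(1) sx sy unfolding D_def by (simp add: algebra_simps)
    have hD: "h\<^sup>2 * D = l\<^sup>2" using D1 h2 by simp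
    have h4D: "h ^ 4 * D\<^sup>2 = l ^ 4" using D1 h4 by simp
    have a: "h\<^sup>2 * (sqd d b1 + sqd d b2 + sqd d b3 + sqd d b4) \<le> 2 * (X + Y) * l\<^sup>2"
    proof -
      have "h\<^sup>2 * (sqd d b1 + sqd d b2 + sqd d b3 + sqd d b4) \<le> h\<^sup>2 * (2 * (X + Y) * D)"
        by (rule mult_left_mono[OF Sb]) simp
      also have "\<dots> = 2 * (X + Y) * (h\<^sup>2 * D)" by (simp only: mult_ac)
      also have "\<dots> = 2 * (X + Y) * l\<^sup>2" by (simp only: hD)
      finally show ?thesis .
    qed
    have b: "h\<^sup>2 * (sqd d x + sqd d y) \<le> (X + Y) * l\<^sup>2"
    proof -
      have "sqd d x + sqd d y \<le> (X + Y) * D" using sx sy unfolding D_def by (simp add: algebra_simps)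
      then have "h\<^sup>2 * (sqd d x + sqd d y) \<le> h\<^sup>2 * ((X + Y) * D)"
        by (rule mult_left_mono) simp
      also have "\<dots> = (X + Y) * (h\<^sup>2 * D)" by (simp only: mult_ac)
      also have "\<dots> = (X + Y) * l\<^sup>2" by (simp only: hD)
      finally show ?thesis .
    qed
    have cc: "h ^ 4 * v \<le> 3 * l ^ 4"
    proof -
      have "h ^ 4 * v \<le> h ^ 4 * (3 * D\<^sup>2)" by (rule mult_left_mono[OF v(2)]) (simp add: h0)
      also have "\<dots> = 3 * (h ^ 4 * D\<^sup>2)" by (simp only: mult_ac)
      also have "\<dots> = 3 * l ^ 4" by (simp only: h4D)
      finally show ?thesis .
    qed
    have e: "h ^ 4 \<le> l ^ 4"
    proof -
      have "h ^ 4 * 1 \<le> h ^ 4 * D\<^sup>2" using D1 h0 by (intro mult_left_mono) (auto simp: one_le_power)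
      then show ?thesis using h4D by simp
    qed
    have "IF + IG = (16 * (h\<^sup>2 * (sqd d b1 + sqd d b2 + sqd d b3 + sqd d b4)) + 64 * (h ^ 4 * v)
         + 32 * (h\<^sup>2 * (sqd d x + sqd d y)) + 192 * h ^ 4) / D\<^sup>2"
      unfolding IF_def IG_def mom_vals by (simp add: add_divide_distrib algebra_simps)
    also have "\<dots> \<le> (64 * l\<^sup>2 * (X + Y) + 384 * l ^ 4) / D\<^sup>2"
    proof (rule divide_right_mono)
      show "16 * (h\<^sup>2 * (sqd d b1 + sqd d b2 + sqd d b3 + sqd d b4)) + 64 * (h ^ 4 * v)
         + 32 * (h\<^sup>2 * (sqd d x + sqd d y)) + 192 * h ^ 4 \<le> 64 * l\<^sup>2 * (X + Y) + 384 * l ^ 4"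
        using a b cc e by (simp add: algebra_simps)
    qed simp
    finally show "IF + IG \<le> (64 * l\<^sup>2 * (X + Y) + 384 * l ^ 4) / (real d)\<^sup>2" unfolding D_def .
  qed
  finally show ?thesis .
qed


theorem proposition2:
  fixes c :: coupling and l X Y :: real
  assumes "l > 0" and "X > 0" and "Y > 0"
  shows "limsup (\<lambda>d::nat. (SUP xy \<in> {(x, y). Wstat d x y \<in> Sset X Y}.
            cond_incr c l d (fst xy) (snd xy)) * ennreal ((real d)\<^sup>2)) < \<infinity>"
proof -
  define K where "K = 64 * l\<^sup>2 * (X + Y) + 384 * l ^ 4"
  have ev: "eventually (\<lambda>d::nat. (SUP xy \<in> {(x, y). Wstat d x y \<in> Sset X Y}.
            cond_incr c l d (fst xy) (snd xy)) * ennreal ((real d)\<^sup>2) \<le> ennreal K) sequentially"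
    unfolding eventually_sequentially
  proof (intro exI allI impI)
    fix d :: nat assume "1 \<le> d"
    then have d: "d > 0" by simp
    have "(SUP xy \<in> {(x, y). Wstat d x y \<in> Sset X Y}. cond_incr c l d (fst xy) (snd xy)) \<le> ennreal (K / (real d)\<^sup>2)"
    proof (rule SUP_least)
      fix xy assume "xy \<in> {(x, y). Wstat d x y \<in> Sset X Y}"
      then have m: "Wstat d (fst xy) (snd xy) \<in> Sset X Y" by (cases xy) auto
      have "sqd d (fst xy) / real d \<le> X" "sqd d (snd xy) / real d \<le> Y"
        using m by (auto simp: Wstat_def Sset_def)
      then have "sqd d (fst xy) \<le> X * real d" "sqd d (snd xy) \<le> Y * real d"
        using d by (auto simp: divide_le_eq)
      then show "cond_incr c l d (fst xy) (snd xy) \<le> ennreal (K / (real d)\<^sup>2)"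
        unfolding K_def using cond_bound[OF d assms(1)] assms by (simp add: less_imp_le)
    qed
    then have "(SUP xy \<in> {(x, y). Wstat d x y \<in> Sset X Y}. cond_incr c l d (fst xy) (snd xy)) * ennreal ((real d)\<^sup>2)
        \<le> ennreal (K / (real d)\<^sup>2) * ennreal ((real d)\<^sup>2)"
      by (rule mult_right_mono) simp
    also have "\<dots> = ennreal (K / (real d)\<^sup>2 * (real d)\<^sup>2)"
      by (rule ennreal_mult''[symmetric]) simp
    also have "\<dots> = ennreal K" using d by simp
    finally show "(SUP xy \<in> {(x, y). Wstat d x y \<in> Sset X Y}. cond_incr c l d (fst xy) (snd xy)) * ennreal ((real d)\<^sup>2)
        \<le> ennreal K" .
  qed
  have "limsup (\<lambda>d::nat. (SUP xy \<in> {(x, y). Wstat d x y \<in> Sset X Y}.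
            cond_incr c l d (fst xy) (snd xy)) * ennreal ((real d)\<^sup>2)) \<le> ennreal K"
    by (rule Limsup_bounded[OF ev])
  also have "\<dots> < \<infinity>" by simp
  finally show ?thesis .
qed

end
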